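(* For a fixed $\tau=\tau_1\ldots\tau_k\in\mathcal{S}_k$ and $n\ge k$, the number $\mathrm{inv}_n(\tau)$ of involutions in $\mathcal{S}_n$ which contain $\tau$ as a subsequence equals $$\sum_{j\in\mathcal{J}(\tau)}\binom{n-k}{k-j}t_{n-2k+j}.$$
   Context: $t_m$ denotes the number of involutions in $\mathcal{S}_m$ ($t_0=1$); terms with $k-j>n-k$ are $0$. A permutation $\pi=\pi_1\ldots\pi_n$ contains $\tau$ as a subsequence if there are indices $i_1<\cdots<i_k$ with $\pi_{i_r}=\tau_r$ for all $r$. The pattern of a word of $j$ distinct letters is its order-preserving relabeling by $\{1,\ldots,j\}$; the length-$j$ initial pattern of $\tau$ is the pattern of $\tau_1\ldots\tau_j$. The $j$-set $\mathcal{J}(\tau)$ of $\tau\in\mathcal{S}_k$ is the set consisting of $0$ together with all $j\in\{1,\ldots,k\}$ such that the length-$j$ initial pattern of $\tau$ is an involution in $\mathcal{S}_j$. *)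

theory Defs
  imports Main
begin

text \<open>Permutations of S_n are represented in one-line notation as lists
  pi_1 ... pi_n (list index i-1 holds pi_i), with values in 1..n.\<close>

definition perms :: "nat \<Rightarrow> nat list set" where
  "perms n = {p. length p = n \<and> distinct p \<and> set p = {1..n}}"

definition is_involution :: "nat list \<Rightarrow> bool" where
  "is_involution p \<longleftrightarrow> (\<forall>i < length p. p ! (p ! i - 1) = i + 1)"

definition involutions :: "nat \<Rightarrow> nat list set" where
  "involutions n = {p \<in> perms n. is_involution p}"

definition t :: "nat \<Rightarrow> nat" where
  "t m = card (involutions m)"

definition contains_subseq :: "nat list \<Rightarrow> nat list \<Rightarrow> bool" where
  "contains_subseq p \<tau> \<longleftrightarrow>
     (\<exists>is. length is = length \<tau> \<and> sorted_wrt (<) is \<and>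
        (\<forall>r < length \<tau>. is ! r < length p \<and> p ! (is ! r) = \<tau> ! r))"

text \<open>Pattern of a word of distinct letters: order-preserving relabeling by 1..j.\<close>
definition pattern :: "nat list \<Rightarrow> nat list" where
  "pattern w = map (\<lambda>x. card {y \<in> set w. y \<le> x}) w"

definition initial_pattern :: "nat \<Rightarrow> nat list \<Rightarrow> nat list" where
  "initial_pattern j \<tau> = pattern (take j \<tau>)"

definition jset :: "nat list \<Rightarrow> nat set" where
  "jset \<tau> = {0} \<union> {j \<in> {1..length \<tau>}. initial_pattern j \<tau> \<in> involutions j}"

definition inv_count :: "nat \<Rightarrow> nat list \<Rightarrow> nat" where
  "inv_count n \<tau> = card {p \<in> involutions n. contains_subseq p \<tau>}"

end

theory Submission
  imports Defs
begin

definition invs :: "nat set \<Rightarrow> (nat \<Rightarrow> nat) set" where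
  "invs S = {f. (\<forall>x\<in>S. f x \<in> S \<and> f (f x) = x) \<and> (\<forall>x. x \<notin> S \<longrightarrow> f x = x)}"

definition rk :: "nat set \<Rightarrow> nat \<Rightarrow> nat" where
  "rk X x = card {y\<in>X. y \<le> x}"

lemma smono_unique:
  fixes h1 h2 :: "nat \<Rightarrow> nat"
  assumes m1: "\<And>r s. a \<le> r \<Longrightarrow> r < s \<Longrightarrow> s < b \<Longrightarrow> h1 r < h1 s"
    and m2: "\<And>r s. a \<le> r \<Longrightarrow> r < s \<Longrightarrow> s < b \<Longrightarrow> h2 r < h2 s"
    and im: "h1 ` {a..<b} = h2 ` {a..<b}"
    and r: "a \<le> r" "r < b"
  shows "h1 r = h2 r"
proof -
  have s1: "sorted_wrt (<) (map h1 [a..<b])"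
    unfolding sorted_wrt_iff_nth_less using m1 by auto
  have s2: "sorted_wrt (<) (map h2 [a..<b])"
    unfolding sorted_wrt_iff_nth_less using m2 by auto
  have "map h1 [a..<b] = map h2 [a..<b]"
    using s1 s2 im by (intro sorted_distinct_set_unique) (auto simp: strict_sorted_iff)
  then have "\<forall>x\<in>{a..<b}. h1 x = h2 x" by (simp add: map_eq_conv)
  then show ?thesis using r by simp
qed

lemma rk_pos: "finite X \<Longrightarrow> x \<in> X \<Longrightarrow> 1 \<le> rk X x"
proof -
  assume a: "finite X" "x \<in> X"
  then have "{y\<in>X. y \<le> x} \<noteq> {}" "finite {y\<in>X. y \<le> x}" by auto
  then show ?thesis unfolding rk_def by (simp add: Suc_le_eq card_gt_0_iff)
qed

lemma rk_le: "finite X \<Longrightarrow> rk X x \<le> card X"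
  unfolding rk_def by (rule card_mono) auto

lemma rk_mono: "finite X \<Longrightarrow> x \<le> x' \<Longrightarrow> rk X x \<le> rk X x'"
  unfolding rk_def by (rule card_mono) auto

lemma rk_smono: "finite X \<Longrightarrow> x' \<in> X \<Longrightarrow> x < x' \<Longrightarrow> rk X x < rk X x'"
proof -
  assume a: "finite X" "x' \<in> X" "x < x'"
  have "{y\<in>X. y \<le> x} \<subset> {y\<in>X. y \<le> x'}"
  proof
    show "{y\<in>X. y \<le> x} \<subseteq> {y\<in>X. y \<le> x'}" using a by auto
    have "x' \<in> {y\<in>X. y \<le> x'}" "x' \<notin> {y\<in>X. y \<le> x}" using a by auto
    then show "{y\<in>X. y \<le> x} \<noteq> {y\<in>X. y \<le> x'}" by blast
  qed
  then show ?thesis unfolding rk_def using a by (intro psubset_card_mono) auto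
qed

lemma rk_less_iff: "finite X \<Longrightarrow> x \<in> X \<Longrightarrow> x' \<in> X \<Longrightarrow> rk X x < rk X x' \<longleftrightarrow> x < x'"
proof -
  assume a: "finite X" "x \<in> X" "x' \<in> X"
  have 1: "x < x' \<Longrightarrow> rk X x < rk X x'" using a by (intro rk_smono)
  have 2: "x' \<le> x \<Longrightarrow> rk X x' \<le> rk X x" using a by (intro rk_mono)
  show ?thesis using 1 2 by (cases "x < x'") auto
qed

lemma rk_inj: "finite X \<Longrightarrow> x \<in> X \<Longrightarrow> x' \<in> X \<Longrightarrow> rk X x = rk X x' \<longleftrightarrow> x = x'"
proof -
  assume a: "finite X" "x \<in> X" "x' \<in> X"
  have 1: "x < x' \<Longrightarrow> rk X x < rk X x'" using a by (intro rk_smono)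
  have 2: "x' < x \<Longrightarrow> rk X x' < rk X x" using a by (intro rk_smono)
  show ?thesis using 1 2 by (cases x x' rule: linorder_cases) auto
qed

lemma rk_nth:
  assumes "sorted_wrt (<) xs" "i < length xs"
  shows "rk (set xs) (xs ! i) = Suc i"
proof -
  have "{y \<in> set xs. y \<le> xs ! i} = (!) xs ` {..i}"
  proof
    show "{y \<in> set xs. y \<le> xs ! i} \<subseteq> (!) xs ` {..i}"
    proof
      fix y assume "y \<in> {y \<in> set xs. y \<le> xs ! i}"
      then obtain l where l: "l < length xs" "y = xs ! l" "xs ! l \<le> xs ! i"
        by (auto simp: in_set_conv_nth)
      have "l \<le> i"
      proof (rule ccontr)
        assume "\<not> l \<le> i" then have "xs ! i < xs ! l"
          using assms l by (simp add: sorted_wrt_iff_nth_less)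
        then show False using l by simp
      qed
      then show "y \<in> (!) xs ` {..i}" using l by auto
    qed
  next
    show "(!) xs ` {..i} \<subseteq> {y \<in> set xs. y \<le> xs ! i}"
    proof
      fix y assume "y \<in> (!) xs ` {..i}"
      then obtain l where l: "l \<le> i" "y = xs ! l" by auto
      have "xs ! l \<le> xs ! i"
        using assms l by (cases "l = i") (auto simp: sorted_wrt_iff_nth_less less_imp_le)
      then show "y \<in> {y \<in> set xs. y \<le> xs ! i}" using l assms by auto
    qed
  qed
  moreover have "inj_on ((!) xs) {..i}"
    using assms by (intro inj_on_nth) (auto simp: strict_sorted_iff)
  ultimately show ?thesis unfolding rk_def by (simp add: card_image)
qed

lemma rk_sorted:
  assumes "finite X" "q < card X"
  shows "rk X (sorted_list_of_set X ! q) = Suc q"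
  using rk_nth[of "sorted_list_of_set X" q] assms by simp

lemma rk_surj:
  assumes "finite X" "1 \<le> i" "i \<le> card X"
  shows "\<exists>x\<in>X. rk X x = i"
proof -
  have "rk X (sorted_list_of_set X ! (i - 1)) = i" using rk_sorted[of X "i - 1"] assms by simp
  moreover have "i - 1 < length (sorted_list_of_set X)" using assms by simp
  then have "sorted_list_of_set X ! (i - 1) \<in> set (sorted_list_of_set X)" by (rule nth_mem)
  then have "sorted_list_of_set X ! (i - 1) \<in> X" using assms by simp
  ultimately show ?thesis by blast
qed

lemma finite_invs: "finite S \<Longrightarrow> finite (invs S)"
proof -
  assume fS: "finite S"
  let ?L = "sorted_list_of_set S"
  have "inj_on (\<lambda>f. map f ?L) (invs S)"
  proof (rule inj_onI)
    fix f g assume f: "f \<in> invs S" and g: "g \<in> invs S" and e: "map f ?L = map g ?L"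
    show "f = g"
    proof
      fix x show "f x = g x"
        using f g e fS by (cases "x \<in> S") (auto simp: invs_def map_eq_conv)
    qed
  qed
  moreover have "(\<lambda>f. map f ?L) ` invs S \<subseteq> {xs. set xs \<subseteq> S \<and> length xs = card S}"
    using fS by (auto simp: invs_def)
  moreover have "finite {xs. set xs \<subseteq> S \<and> length xs = card S}"
    using fS by (rule finite_lists_length_eq)
  ultimately show ?thesis by (metis finite_imageD finite_subset)
qed

lemma invs_card_le:
  assumes h: "bij_betw h S T" and fS: "finite S" and fT: "finite T"
  shows "card (invs S) \<le> card (invs T)"
proof -
  define h' where "h' = inv_into S h"
  define F where "F f = (\<lambda>y. if y \<in> T then h (f (h' y)) else y)" for f :: "nat \<Rightarrow> nat"
  have hS: "\<And>x. x \<in> S \<Longrightarrow> h x \<in> T" and h'T: "\<And>y. y \<in> T \<Longrightarrow> h' y \<in> S"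
    and hh': "\<And>y. y \<in> T \<Longrightarrow> h (h' y) = y" and h'h: "\<And>x. x \<in> S \<Longrightarrow> h' (h x) = x"
    using h unfolding h'_def
    by (auto simp: bij_betw_def inv_into_into f_inv_into_f inv_into_f_f)
  have "F ` invs S \<subseteq> invs T"
  proof
    fix g assume "g \<in> F ` invs S"
    then obtain f where f: "f \<in> invs S" and g: "g = F f" by auto
    show "g \<in> invs T" unfolding invs_def
    proof (intro CollectI conjI ballI allI impI)
      fix y assume y: "y \<in> T"
      have a: "f (h' y) \<in> S" using f h'T[OF y] by (auto simp: invs_def)
      show "g y \<in> T" using y a hS g F_def by auto
      have "g (g y) = h (f (h' (h (f (h' y)))))" using y a hS g F_def by auto
      also have "\<dots> = h (f (f (h' y)))" using h'h[OF a] by simp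
      also have "\<dots> = y" using f h'T[OF y] hh'[OF y] by (auto simp: invs_def)
      finally show "g (g y) = y" .
    next
      fix y assume "y \<notin> T" then show "g y = y" using g F_def by auto
    qed
  qed
  moreover have "inj_on F (invs S)"
  proof (rule inj_onI)
    fix f1 f2 assume f1: "f1 \<in> invs S" and f2: "f2 \<in> invs S" and e: "F f1 = F f2"
    show "f1 = f2"
    proof
      fix x show "f1 x = f2 x"
      proof (cases "x \<in> S")
        case True
        have "F f1 (h x) = F f2 (h x)" using e by simp
        then have "h (f1 x) = h (f2 x)" using True hS h'h F_def by simp
        moreover have "f1 x \<in> S" "f2 x \<in> S" using f1 f2 True by (auto simp: invs_def)
        ultimately show ?thesis using h'h by metis
      next
        case False then show ?thesis using f1 f2 by (auto simp: invs_def)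
      qed
    qed
  qed
  ultimately show ?thesis using finite_invs[OF fT] by (intro card_inj_on_le)
qed

lemma invs_card:
  assumes "finite S" "finite T" "card S = card T"
  shows "card (invs S) = card (invs T)"
proof -
  obtain h where h: "bij_betw h S T" using assms finite_same_card_bij by blast
  have "bij_betw (inv_into S h) T S" using h by (rule bij_betw_inv_into)
  then show ?thesis using h assms by (meson invs_card_le le_antisym)
qed

definition fun_of :: "nat list \<Rightarrow> nat \<Rightarrow> nat" where
  "fun_of p = (\<lambda>x. if 1 \<le> x \<and> x \<le> length p then p ! (x - 1) else x)"

lemma involutions_iff:
  "p \<in> involutions m \<longleftrightarrow> length p = m \<and> distinct p \<and> set p = {1..m} \<and> is_involution p"
  by (auto simp: involutions_def perms_def)

lemma inv_list_facts:
  assumes "p \<in> involutions m" "i < m"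
  shows "p ! i \<in> {1..m}" "p ! (p ! i - 1) = i + 1"
  using assms by (auto simp: involutions_iff is_involution_def)

lemma fun_of_invs:
  assumes p: "p \<in> involutions m"
  shows "fun_of p \<in> invs {1..m}"
proof -
  have len: "length p = m" using p by (simp add: involutions_iff)
  show ?thesis unfolding invs_def
  proof (intro CollectI conjI ballI allI impI)
    fix x assume x: "x \<in> {1..m}"
    then have i: "x - 1 < m" by auto
    have a: "p ! (x - 1) \<in> {1..m}" using inv_list_facts(1)[OF p i] .
    show "fun_of p x \<in> {1..m}" using x a len by (simp add: fun_of_def)
    have "fun_of p (fun_of p x) = p ! (p ! (x - 1) - 1)" using x a len by (simp add: fun_of_def)
    also have "\<dots> = x" using inv_list_facts(2)[OF p i] x by simp
    finally show "fun_of p (fun_of p x) = x" .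
  next
    fix x assume "x \<notin> {1..m}" then show "fun_of p x = x" using len by (auto simp: fun_of_def)
  qed
qed

lemma invs_image: "f \<in> invs S \<Longrightarrow> f ` S = S"
proof
  assume f: "f \<in> invs S"
  show "f ` S \<subseteq> S" using f by (auto simp: invs_def)
  show "S \<subseteq> f ` S"
  proof
    fix x assume x: "x \<in> S"
    then have "x = f (f x)" "f x \<in> S" using f by (auto simp: invs_def)
    then show "x \<in> f ` S" by (rule image_eqI)
  qed
qed

lemma invs_inj: assumes f: "f \<in> invs S" shows "inj_on f S"
proof (rule inj_onI)
  fix x y assume xy: "x \<in> S" "y \<in> S" "f x = f y"
  have "x = f (f x)" using f xy(1) by (simp add: invs_def)
  also have "\<dots> = f (f y)" using xy(3) by (rule arg_cong)
  also have "\<dots> = y" using f xy(2) by (simp add: invs_def)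
  finally show "x = y" .
qed

lemma map_invs:
  assumes f: "f \<in> invs {1..m}"
  shows "map (\<lambda>i. f (Suc i)) [0..<m] \<in> involutions m"
proof -
  have fS: "\<And>x. x \<in> {1..m} \<Longrightarrow> f x \<in> {1..m}" and ff: "\<And>x. x \<in> {1..m} \<Longrightarrow> f (f x) = x"
    using f by (auto simp: invs_def)
  have "inj_on (\<lambda>i. f (Suc i)) {0..<m}"
    by (intro inj_onI) (auto dest: inj_onD[OF invs_inj[OF f]])
  then have "distinct (map (\<lambda>i. f (Suc i)) [0..<m])" by (simp add: distinct_map)
  moreover have "set (map (\<lambda>i. f (Suc i)) [0..<m]) = {1..m}"
  proof -
    have e: "Suc ` {0..<m} = {1..m}"
    proof
      show "Suc ` {0..<m} \<subseteq> {1..m}" by auto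
      show "{1..m} \<subseteq> Suc ` {0..<m}"
      proof
        fix x assume "x \<in> {1..m}"
        then have "x = Suc (x - 1)" "x - 1 \<in> {0..<m}" by auto
        then show "x \<in> Suc ` {0..<m}" by (rule image_eqI)
      qed
    qed
    have "set (map (\<lambda>i. f (Suc i)) [0..<m]) = (\<lambda>i. f (Suc i)) ` {0..<m}" by simp
    also have "\<dots> = f ` (Suc ` {0..<m})" by (rule image_image[symmetric])
    also have "\<dots> = f ` {1..m}" unfolding e ..
    also have "\<dots> = {1..m}" by (rule invs_image[OF f])
    finally show ?thesis .
  qed
  moreover have "is_involution (map (\<lambda>i. f (Suc i)) [0..<m])"
    unfolding is_involution_def
  proof (intro allI impI)
    fix i assume "i < length (map (\<lambda>i. f (Suc i)) [0..<m])"
    then have i: "i < m" by simp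
    have a: "f (Suc i) \<in> {1..m}" using fS i by simp
    have "map (\<lambda>i. f (Suc i)) [0..<m] ! i = f (Suc i)" using i by (simp add: nth_map_upt)
    moreover have "map (\<lambda>i. f (Suc i)) [0..<m] ! (f (Suc i) - 1) = f (f (Suc i))" using a
      by (subst nth_map) auto
    ultimately show "map (\<lambda>i. f (Suc i)) [0..<m] ! (map (\<lambda>i. f (Suc i)) [0..<m] ! i - 1) = i + 1"
      using ff[of "Suc i"] i by simp
  qed
  ultimately show ?thesis by (simp add: involutions_iff)
qed

lemma fun_of_map:
  assumes f: "f \<in> invs {1..m}"
  shows "fun_of (map (\<lambda>i. f (Suc i)) [0..<m]) = f"
proof
  fix x show "fun_of (map (\<lambda>i. f (Suc i)) [0..<m]) x = f x"
  proof (cases "x \<in> {1..m}")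
    case True
    then have "x - 1 < m" "Suc (x - 1) = x" by auto
    then show ?thesis using True by (simp add: fun_of_def)
  next
    case False
    then have "f x = x" using f by (simp add: invs_def)
    moreover have "\<not> (1 \<le> x \<and> x \<le> length (map (\<lambda>i. f (Suc i)) [0..<m]))" using False by simp
    ultimately show ?thesis unfolding fun_of_def by (simp only: if_False)
  qed
qed

lemma map_fun_of:
  assumes p: "p \<in> involutions m"
  shows "map (\<lambda>i. fun_of p (Suc i)) [0..<m] = p"
proof -
  have len: "length p = m" using p by (simp add: involutions_iff)
  show ?thesis by (rule nth_equalityI) (auto simp: len fun_of_def nth_map_upt)
qed

lemma bij_fun_of: "bij_betw fun_of (involutions m) (invs {1..m})"
  apply (rule bij_betw_byWitness[where f'="\<lambda>f. map (\<lambda>i. f (Suc i)) [0..<m]"])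
  using map_fun_of fun_of_map fun_of_invs map_invs by blast+

lemma t_invs: "t m = card (invs {1..m})"
  unfolding t_def using bij_fun_of by (rule bij_betw_same_card)

definition mono_cond :: "nat list \<Rightarrow> nat \<Rightarrow> (nat \<Rightarrow> nat) \<Rightarrow> bool" where
  "mono_cond \<tau> k f \<longleftrightarrow> (\<forall>r s. r < s \<longrightarrow> s < k \<longrightarrow> f (\<tau> ! r) < f (\<tau> ! s))"

lemma contains_iff:
  assumes p: "p \<in> involutions n" and tp: "\<tau> \<in> perms k" and kn: "k \<le> n"
  shows "contains_subseq p \<tau> \<longleftrightarrow> mono_cond \<tau> k (fun_of p)"
proof -
  have len: "length p = n" using p by (simp add: involutions_iff)
  have lt: "length \<tau> = k" and st: "set \<tau> = {1..k}" using tp by (auto simp: perms_def)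
  have tr: "\<And>r. r < k \<Longrightarrow> \<tau> ! r \<in> {1..k}" using lt st nth_mem by blast
  have fo: "\<And>r. r < k \<Longrightarrow> fun_of p (\<tau> ! r) = p ! (\<tau> ! r - 1)"
  proof -
    fix r assume "r < k" then have "\<tau> ! r \<in> {1..k}" by (rule tr)
    then show "fun_of p (\<tau> ! r) = p ! (\<tau> ! r - 1)" using kn len by (simp add: fun_of_def)
  qed
  have fo2: "\<And>r. r < k \<Longrightarrow> p ! (\<tau> ! r - 1) \<in> {1..n}"
  proof -
    fix r assume "r < k" then have "\<tau> ! r \<in> {1..k}" by (rule tr)
    then have "\<tau> ! r - 1 < n" using kn by auto
    then show "p ! (\<tau> ! r - 1) \<in> {1..n}" by (rule inv_list_facts(1)[OF p])
  qed
  show ?thesis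
  proof
    assume "contains_subseq p \<tau>"
    then obtain "is" where il: "length is = k" and so: "sorted_wrt (<) is"
      and h: "\<And>r. r < k \<Longrightarrow> is ! r < length p \<and> p ! (is ! r) = \<tau> ! r"
      unfolding contains_subseq_def lt by blast
    have e: "fun_of p (\<tau> ! r) = is ! r + 1" if "r < k" for r
    proof -
      have a: "is ! r < n" "p ! (is ! r) = \<tau> ! r" using h[OF that] len by auto
      have "p ! (\<tau> ! r - 1) = is ! r + 1" using inv_list_facts(2)[OF p a(1)] a(2) by simp
      then show ?thesis using fo[OF that] by simp
    qed
    show "mono_cond \<tau> k (fun_of p)" unfolding mono_cond_def
    proof (intro allI impI)
      fix r s assume "r < s" "s < k"
      then show "fun_of p (\<tau> ! r) < fun_of p (\<tau> ! s)"
        using e so il by (simp add: sorted_wrt_iff_nth_less)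
    qed
  next
    assume m: "mono_cond \<tau> k (fun_of p)"
    define "is" where "is = map (\<lambda>r. fun_of p (\<tau> ! r) - 1) [0..<k]"
    have isr: "is ! r = p ! (\<tau> ! r - 1) - 1" if "r < k" for r
      using that fo by (simp add: is_def)
    show "contains_subseq p \<tau>" unfolding contains_subseq_def
    proof (intro exI conjI allI impI)
      show "length is = length \<tau>" using lt by (simp add: is_def)
      show "sorted_wrt (<) is" unfolding sorted_wrt_iff_nth_less
      proof (intro allI impI)
        fix i j assume ij: "i < j" "j < length is"
        then have jk: "j < k" "i < k" by (auto simp: is_def)
        then have "fun_of p (\<tau> ! i) < fun_of p (\<tau> ! j)" using m ij by (simp add: mono_cond_def)
        moreover have "1 \<le> fun_of p (\<tau> ! i)" using fo[OF jk(2)] fo2[OF jk(2)] by simp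
        moreover have "is ! i = fun_of p (\<tau> ! i) - 1" "is ! j = fun_of p (\<tau> ! j) - 1"
          using jk by (simp_all add: is_def)
        ultimately show "is ! i < is ! j" by linarith
      qed
    next
      fix r assume r: "r < length \<tau>"
      then have r': "r < k" using lt by simp
      show "is ! r < length p" using isr[OF r'] fo2[OF r'] len by auto
      have "p ! (is ! r) = p ! (p ! (\<tau> ! r - 1) - 1)" using isr[OF r'] by simp
      also have "\<dots> = \<tau> ! r" using inv_list_facts(2)[OF p, of "\<tau> ! r - 1"] tr[OF r'] kn by auto
      finally show "p ! (is ! r) = \<tau> ! r" .
    qed
  qed
qed

lemma pattern_rk: "pattern w = map (rk (set w)) w"
  by (simp add: pattern_def rk_def)

locale S3 =
  fixes \<tau> :: "nat list" and k n :: nat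
  assumes tp: "\<tau> \<in> perms k" and kn: "k \<le> n"
begin

lemma lt: "length \<tau> = k" and dt: "distinct \<tau>" and st: "set \<tau> = {1..k}"
  using tp by (auto simp: perms_def)

lemma tr: "r < k \<Longrightarrow> \<tau> ! r \<in> {1..k}"
  using lt st nth_mem by blast

lemma tinj: "r < k \<Longrightarrow> s < k \<Longrightarrow> \<tau> ! r = \<tau> ! s \<longleftrightarrow> r = s"
  using dt lt by (simp add: nth_eq_iff_index_eq)

lemma tsurj: "x \<in> {1..k} \<Longrightarrow> \<exists>r<k. \<tau> ! r = x"
  using lt st by (metis in_set_conv_nth)

definition Aset :: "(nat \<Rightarrow> nat) \<Rightarrow> nat set" where
  "Aset f = {x \<in> {1..k}. f x \<le> k}"

definition A :: "nat \<Rightarrow> nat set" where "A j = (!) \<tau> ` {..<j}"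
definition C :: "nat \<Rightarrow> nat set" where "C j = (!) \<tau> ` {j..<k}"
definition R :: "nat set" where "R = {k<..n}"
definition PI :: "nat \<Rightarrow> bool" where
  "PI j \<longleftrightarrow> (\<forall>r<j. rk (A j) (\<tau> ! (rk (A j) (\<tau> ! r) - 1)) = Suc r)"
definition idx :: "nat \<Rightarrow> nat" where "idx x = inv_into {..<k} ((!) \<tau>) x"

lemma idx_nth: "r < k \<Longrightarrow> idx (\<tau> ! r) = r"
  unfolding idx_def by (rule inv_into_f_f) (use dt lt in \<open>auto intro: inj_on_nth\<close>)

lemma finA: "finite (A j)" by (simp add: A_def)
lemma finC: "finite (C j)" by (simp add: C_def)
lemma finR: "finite R" by (simp add: R_def)

lemma memA: "j \<le> k \<Longrightarrow> x \<in> A j \<longleftrightarrow> (\<exists>r<j. x = \<tau> ! r)"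
  by (auto simp: A_def)
lemma memC: "x \<in> C j \<longleftrightarrow> (\<exists>r. j \<le> r \<and> r < k \<and> x = \<tau> ! r)"
  by (auto simp: C_def)

lemma A_sub: "j \<le> k \<Longrightarrow> A j \<subseteq> {1..k}"
  using tr by (auto simp: A_def)
lemma C_sub: "C j \<subseteq> {1..k}"
  using tr by (auto simp: C_def)
lemma AC_disj: "j \<le> k \<Longrightarrow> x \<in> A j \<Longrightarrow> x \<notin> C j"
  using tinj by (fastforce simp: A_def C_def)
lemma AC_un: "j \<le> k \<Longrightarrow> x \<in> {1..k} \<Longrightarrow> x \<in> A j \<or> x \<in> C j"
proof -
  assume j: "j \<le> k" and x: "x \<in> {1..k}"
  obtain r where r: "r < k" "\<tau> ! r = x" using tsurj[OF x] by blast
  show ?thesis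
  proof (cases "r < j")
    case True then show ?thesis using r by (auto simp: A_def)
  next
    case False then show ?thesis using r by (auto simp: C_def)
  qed
qed

lemma R_disj: "x \<in> R \<Longrightarrow> x \<notin> {1..k}" by (auto simp: R_def)

lemma card_A: "j \<le> k \<Longrightarrow> card (A j) = j"
proof -
  assume "j \<le> k"
  then have "inj_on ((!) \<tau>) {..<j}" using dt lt by (intro inj_on_nth) auto
  then show ?thesis by (simp add: A_def card_image)
qed

lemma card_C: "card (C j) = k - j"
proof -
  have "inj_on ((!) \<tau>) {j..<k}" using dt lt by (intro inj_on_nth) auto
  then show ?thesis by (simp add: C_def card_image)
qed

lemma A_take: "j \<le> k \<Longrightarrow> A j = set (take j \<tau>)"
  using nth_image[of j \<tau>] lt by (simp add: A_def atLeast0LessThan)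

lemma rkA_range: "j \<le> k \<Longrightarrow> x \<in> A j \<Longrightarrow> 1 \<le> rk (A j) x \<and> rk (A j) x \<le> j"
  using rk_pos[OF finA] rk_le[OF finA] card_A by metis

lemma pattern_inv_iff:
  assumes j: "j \<le> k"
  shows "pattern (take j \<tau>) \<in> involutions j \<longleftrightarrow> PI j"
proof -
  define \<sigma> where "\<sigma> = pattern (take j \<tau>)"
  have sig: "\<sigma> = map (rk (A j)) (take j \<tau>)" unfolding \<sigma>_def pattern_rk A_take[OF j] ..
  have len: "length \<sigma> = j" using j lt by (simp add: sig)
  have sn: "\<And>r. r < j \<Longrightarrow> \<sigma> ! r = rk (A j) (\<tau> ! r)" using j lt by (simp add: sig)
  have tA: "\<And>r. r < j \<Longrightarrow> \<tau> ! r \<in> A j" by (auto simp: A_def)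
  have sr: "\<And>r. r < j \<Longrightarrow> 1 \<le> \<sigma> ! r \<and> \<sigma> ! r \<le> j"
    using sn tA rkA_range[OF j] by metis
  show ?thesis
  proof
    assume "pattern (take j \<tau>) \<in> involutions j"
    then have inv: "is_involution \<sigma>" unfolding \<sigma>_def by (simp add: involutions_def)
    show "PI j" unfolding PI_def
    proof (intro allI impI)
      fix r assume r: "r < j"
      have a: "\<sigma> ! r - 1 < j" using sr[OF r] by linarith
      have "\<sigma> ! (\<sigma> ! r - 1) = r + 1" using inv r len by (simp add: is_involution_def)
      then show "rk (A j) (\<tau> ! (rk (A j) (\<tau> ! r) - 1)) = Suc r" using sn[OF r] sn[OF a] by simp
    qed
  next
    assume pi: "PI j"
    have "distinct \<sigma>" unfolding sig
    proof (rule distinct_map[THEN iffD2], intro conjI)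
      show "distinct (take j \<tau>)" using dt by simp
      show "inj_on (rk (A j)) (set (take j \<tau>))" unfolding A_take[OF j, symmetric]
        by (intro inj_onI) (use rk_inj[OF finA] in blast)
    qed
    moreover have "set \<sigma> = {1..j}"
    proof
      show "set \<sigma> \<subseteq> {1..j}" using sr len by (auto simp: in_set_conv_nth)
      show "{1..j} \<subseteq> set \<sigma>"
      proof
        fix i assume i: "i \<in> {1..j}"
        then obtain x where x: "x \<in> A j" "rk (A j) x = i"
          using rk_surj[OF finA, of i j] card_A[OF j] by auto
        then obtain r where r: "r < j" "x = \<tau> ! r" using memA[OF j] by blast
        then show "i \<in> set \<sigma>" using x sn len by (metis nth_mem)
      qed
    qed
    moreover have "is_involution \<sigma>" unfolding is_involution_def
    proof (intro allI impI)
      fix r assume r: "r < length \<sigma>"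
      then have r': "r < j" using len by simp
      have a: "\<sigma> ! r - 1 < j" using sr[OF r'] by linarith
      show "\<sigma> ! (\<sigma> ! r - 1) = r + 1" using pi r' sn[OF r'] sn[OF a] by (simp add: PI_def)
    qed
    ultimately show "pattern (take j \<tau>) \<in> involutions j"
      using len by (simp add: \<sigma>_def involutions_def perms_def)
  qed
qed

lemma jset_iff: "j \<in> jset \<tau> \<longleftrightarrow> j \<le> k \<and> PI j"
proof (cases "j = 0")
  case True then show ?thesis by (simp add: jset_def PI_def)
next
  case False then show ?thesis
    using pattern_inv_iff by (auto simp: jset_def initial_pattern_def lt)
qed

end

context S3
begin

definition cls :: "nat \<Rightarrow> (nat \<Rightarrow> nat) set" where
  "cls j = {f \<in> invs {1..n}. mono_cond \<tau> k f \<and> card (Aset f) = j}"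

lemma invsD:
  assumes "f \<in> invs S"
  shows "x \<in> S \<Longrightarrow> f x \<in> S" "x \<in> S \<Longrightarrow> f (f x) = x" "x \<notin> S \<Longrightarrow> f x = x"
  using assms by (auto simp: invs_def)

lemma A_nth: "r < j \<Longrightarrow> \<tau> ! r \<in> A j" by (auto simp: A_def)
lemma C_nth: "j \<le> r \<Longrightarrow> r < k \<Longrightarrow> \<tau> ! r \<in> C j" by (auto simp: C_def)

lemma aset_struct:
  assumes f: "f \<in> invs {1..n}" and m: "mono_cond \<tau> k f"
  shows "card (Aset f) \<le> k \<and> Aset f = A (card (Aset f))"
proof -
  define D where "D = {r. r < k \<and> \<tau> ! r \<in> Aset f}"
  have down: "r \<in> D" if "s \<in> D" "r < s" for r s
  proof -
    have "f (\<tau> ! r) < f (\<tau> ! s)" using m that by (auto simp: mono_cond_def D_def)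
    moreover have "f (\<tau> ! s) \<le> k" using that by (auto simp: D_def Aset_def)
    moreover have "r < k" using that by (auto simp: D_def)
    ultimately show ?thesis using tr[of r] by (auto simp: D_def Aset_def)
  qed
  have AD: "Aset f = (!) \<tau> ` D"
  proof
    show "Aset f \<subseteq> (!) \<tau> ` D"
    proof
      fix x assume x: "x \<in> Aset f"
      then have "x \<in> {1..k}" by (simp add: Aset_def)
      then obtain r where "r < k" "\<tau> ! r = x" using tsurj by blast
      then show "x \<in> (!) \<tau> ` D" using x by (auto simp: D_def)
    qed
    show "(!) \<tau> ` D \<subseteq> Aset f" by (auto simp: D_def)
  qed
  have kD: "k \<notin> D" by (simp add: D_def)
  define m where "m = (LEAST r. r \<notin> D)"
  have mD: "m \<notin> D" unfolding m_def using kD by (rule LeastI)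
  have mk: "m \<le> k" unfolding m_def using kD by (rule Least_le)
  have Dm: "D = {..<m}"
  proof
    show "D \<subseteq> {..<m}"
    proof
      fix r assume r: "r \<in> D"
      show "r \<in> {..<m}"
      proof (rule ccontr)
        assume "r \<notin> {..<m}"
        then have "m \<le> r" by simp
        then have "m \<in> D" using r down by (cases "m = r") auto
        then show False using mD by simp
      qed
    qed
    show "{..<m} \<subseteq> D"
    proof
      fix r assume "r \<in> {..<m}"
      then have "r < m" by simp
      then show "r \<in> D" unfolding m_def using not_less_Least by blast
    qed
  qed
  have "Aset f = A m" using AD Dm by (simp add: A_def)
  moreover have "card (A m) = m" using card_A[OF mk] .
  ultimately show ?thesis using mk by simp
qed

lemma cls_basic:
  assumes f: "f \<in> cls j"
  shows "j \<le> k" "Aset f = A j" "f \<in> invs {1..n}" "mono_cond \<tau> k f"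
  using aset_struct[of f] f by (auto simp: cls_def)

lemma cls_A:
  assumes f: "f \<in> cls j" and x: "x \<in> A j"
  shows "f x \<in> A j"
proof -
  note b = cls_basic[OF f]
  have xa: "x \<in> Aset f" using x b by simp
  then have xk: "x \<in> {1..k}" "f x \<le> k" by (auto simp: Aset_def)
  have "f x \<in> {1..n}" using invsD(1)[OF b(3)] xk kn by auto
  moreover have "f (f x) = x" using invsD(2)[OF b(3)] xk kn by auto
  ultimately have "f x \<in> Aset f" using xk by (auto simp: Aset_def)
  then show ?thesis using b by simp
qed

lemma cls_C:
  assumes f: "f \<in> cls j" and x: "x \<in> C j"
  shows "f x \<in> R"
proof -
  note b = cls_basic[OF f]
  have xk: "x \<in> {1..k}" using x C_sub by blast
  have "x \<notin> A j" using AC_disj[OF b(1)] x by blast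
  then have "\<not> f x \<le> k" using xk b by (auto simp: Aset_def)
  moreover have "f x \<in> {1..n}" using invsD(1)[OF b(3)] xk kn by auto
  ultimately show ?thesis by (auto simp: R_def)
qed

lemma cls_rk:
  assumes f: "f \<in> cls j" and r: "r < j"
  shows "rk (A j) (f (\<tau> ! r)) = Suc r"
proof -
  note b = cls_basic[OF f]
  define h where "h r = rk (A j) (f (\<tau> ! r)) - 1" for r
  have inA: "\<And>r. r < j \<Longrightarrow> f (\<tau> ! r) \<in> A j" using cls_A[OF f] A_nth by blast
  have rng: "\<And>r. r < j \<Longrightarrow> 1 \<le> rk (A j) (f (\<tau> ! r)) \<and> rk (A j) (f (\<tau> ! r)) \<le> j"
    using inA rkA_range[OF b(1)] by blast
  have sm: "h r < h s" if "0 \<le> r" "r < s" "s < j" for r s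
  proof -
    have "f (\<tau> ! r) < f (\<tau> ! s)" using b(4) that b(1) by (simp add: mono_cond_def)
    then have "rk (A j) (f (\<tau> ! r)) < rk (A j) (f (\<tau> ! s))"
      using inA that by (intro rk_smono[OF finA]) auto
    moreover have "1 \<le> rk (A j) (f (\<tau> ! r))" using rng[of r] that by simp
    ultimately show ?thesis unfolding h_def by linarith
  qed
  have sub: "h ` {0..<j} \<subseteq> {0..<j}" using rng by (force simp: h_def)
  have inj: "inj_on h {0..<j}"
  proof (rule inj_onI)
    fix a c assume ac: "a \<in> {0..<j}" "c \<in> {0..<j}" "h a = h c"
    show "a = c"
    proof (cases a c rule: linorder_cases)
      case less then show ?thesis using sm[of a c] ac by auto
    next
      case greater then show ?thesis using sm[of c a] ac by auto
    qed
  qed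
  have "h ` {0..<j} = {0..<j}" using endo_inj_surj[OF _ sub inj] by simp
  then have "h ` {0..<j} = id ` {0..<j}" by simp
  then have "h r = id r" using sm r by (intro smono_unique[of 0 j h id]) auto
  moreover have "1 \<le> rk (A j) (f (\<tau> ! r))" using rng[OF r] by simp
  ultimately show ?thesis unfolding h_def id_def by linarith
qed

lemma cls_A_val:
  assumes f: "f \<in> cls j" and x: "x \<in> A j"
  shows "f x = \<tau> ! (rk (A j) x - 1)"
proof -
  note b = cls_basic[OF f]
  obtain r where r: "r < j" "x = \<tau> ! r" using x memA[OF b(1)] by blast
  define u where "u = rk (A j) x - 1"
  have u: "u < j" "Suc u = rk (A j) x" using rkA_range[OF b(1) x] by (auto simp: u_def)
  have "rk (A j) (f (\<tau> ! u)) = rk (A j) x" using cls_rk[OF f u(1)] u(2) by simp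
  then have "f (\<tau> ! u) = x"
    using rk_inj[OF finA] cls_A[OF f A_nth[OF u(1)]] x by blast
  then have "f x = f (f (\<tau> ! u))" by simp
  also have "\<dots> = \<tau> ! u" using invsD(2)[OF b(3)] tr[of u] u(1) b(1) kn by auto
  finally show ?thesis by (simp add: u_def)
qed

lemma cls_PI:
  assumes f: "f \<in> cls j"
  shows "PI j"
  unfolding PI_def
proof (intro allI impI)
  fix r assume r: "r < j"
  have "f (\<tau> ! r) = \<tau> ! (rk (A j) (\<tau> ! r) - 1)" using cls_A_val[OF f A_nth[OF r]] .
  then show "rk (A j) (\<tau> ! (rk (A j) (\<tau> ! r) - 1)) = Suc r" using cls_rk[OF f r] by simp
qed

end

context S3
begin

definition Tg :: "nat \<Rightarrow> (nat set \<times> (nat \<Rightarrow> nat)) set" where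
  "Tg j = Sigma {B. B \<subseteq> R \<and> card B = k - j} (\<lambda>B. invs (R - B))"

definition Psi :: "nat \<Rightarrow> (nat \<Rightarrow> nat) \<Rightarrow> nat set \<times> (nat \<Rightarrow> nat)" where
  "Psi j f = (f ` C j, \<lambda>x. if x \<in> R - f ` C j then f x else x)"

definition Phi :: "nat \<Rightarrow> nat set \<times> (nat \<Rightarrow> nat) \<Rightarrow> nat \<Rightarrow> nat" where
  "Phi j Bg = (\<lambda>x. if x \<in> A j then \<tau> ! (rk (A j) x - 1)
      else if x \<in> C j then sorted_list_of_set (fst Bg) ! (idx x - j)
      else if x \<in> fst Bg then \<tau> ! (j + rk (fst Bg) x - 1)
      else snd Bg x)"

lemma S_split: "x \<in> {1..n} \<Longrightarrow> x \<in> {1..k} \<or> x \<in> R"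
  by (auto simp: R_def)
lemma R_S: "R \<subseteq> {1..n}" by (auto simp: R_def)
lemma k_S: "{1..k} \<subseteq> {1..n}" using kn by auto

lemma C_shift: "j \<le> k \<Longrightarrow> C j = (\<lambda>q. \<tau> ! (j + q)) ` {0..<k - j}"
proof
  assume j: "j \<le> k"
  show "C j \<subseteq> (\<lambda>q. \<tau> ! (j + q)) ` {0..<k - j}"
  proof
    fix x assume "x \<in> C j"
    then obtain r where r: "j \<le> r" "r < k" "x = \<tau> ! r" by (auto simp: memC)
    then have "x = \<tau> ! (j + (r - j))" "r - j \<in> {0..<k - j}" by auto
    then show "x \<in> (\<lambda>q. \<tau> ! (j + q)) ` {0..<k - j}" by (rule image_eqI)
  qed
  show "(\<lambda>q. \<tau> ! (j + q)) ` {0..<k - j} \<subseteq> C j" using C_nth by auto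
qed

lemma notAC_R: "j \<le> k \<Longrightarrow> x \<in> R \<Longrightarrow> x \<notin> A j \<and> x \<notin> C j"
proof -
  assume j: "j \<le> k" and x: "x \<in> R"
  have "x \<notin> {1..k}" using x by (rule R_disj)
  then show ?thesis using A_sub[OF j] C_sub[of j] by blast
qed

lemma set_nth_image: "(!) L ` {0..<length L} = set L"
  using nth_image[of "length L" L] by simp

context
  fixes j :: nat and B :: "nat set" and g :: "nat \<Rightarrow> nat"
  assumes j: "j \<le> k" and B: "B \<subseteq> R" "card B = k - j" and g: "g \<in> invs (R - B)"
begin

definition L where "L = sorted_list_of_set B"

lemma finB: "finite B" using B finR finite_subset by blast
lemma L_len: "length L = k - j" using B finB by (simp add: L_def)
lemma L_sorted: "sorted_wrt (<) L" by (simp add: L_def)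
lemma L_set: "set L = B" using finB by (simp add: L_def)
lemma L_rk: "q < k - j \<Longrightarrow> rk B (L ! q) = Suc q"
  using rk_sorted[OF finB, of q] B by (simp add: L_def)
lemma L_in: "q < k - j \<Longrightarrow> L ! q \<in> B"
proof -
  assume q: "q < k - j"
  have "L ! q \<in> set L" using q L_len by (intro nth_mem) simp
  then show ?thesis using L_set by simp
qed
lemma B_notk: "x \<in> B \<Longrightarrow> x \<notin> {1..k}"
proof -
  assume "x \<in> B" then have "x \<in> R" using B(1) by (rule subsetD[rotated])
  then show ?thesis by (rule R_disj)
qed

lemma PhiA: "x \<in> A j \<Longrightarrow> Phi j (B, g) x = \<tau> ! (rk (A j) x - 1)"
  by (simp add: Phi_def)
lemma PhiC: "j \<le> r \<Longrightarrow> r < k \<Longrightarrow> Phi j (B, g) (\<tau> ! r) = L ! (r - j)"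
  using AC_disj[OF j] C_nth[of j r] idx_nth[of r] by (auto simp: Phi_def L_def)
lemma PhiB: "q < k - j \<Longrightarrow> Phi j (B, g) (L ! q) = \<tau> ! (j + q)"
proof -
  assume q: "q < k - j"
  have "L ! q \<in> R" using B L_in[OF q] by blast
  then have "L ! q \<notin> A j" "L ! q \<notin> C j" using notAC_R[OF j] by blast+
  then show ?thesis using L_in[OF q] L_rk[OF q] by (simp add: Phi_def)
qed
lemma PhiO: "x \<notin> A j \<Longrightarrow> x \<notin> C j \<Longrightarrow> x \<notin> B \<Longrightarrow> Phi j (B, g) x = g x"
  by (simp add: Phi_def)

lemma Phi_cls:
  assumes pi: "PI j"
  shows "Phi j (B, g) \<in> cls j"
proof -
  let ?f = "Phi j (B, g)"
  have fA: "?f (\<tau> ! r) = \<tau> ! (rk (A j) (\<tau> ! r) - 1)" if "r < j" for r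
    using PhiA A_nth that by blast
  have uA: "rk (A j) (\<tau> ! r) - 1 < j" if "r < j" for r
    using rkA_range[OF j A_nth[OF that]] by linarith
  have rkf: "rk (A j) (?f (\<tau> ! r)) = Suc r" if "r < j" for r
    using pi that fA by (simp add: PI_def)
  have fAin: "?f x \<in> A j" if "x \<in> A j" for x
    using that uA fA A_nth memA[OF j] by auto
  have caseA: "?f (?f x) = x" if x: "x \<in> A j" for x
  proof -
    obtain r where r: "r < j" "x = \<tau> ! r" using x memA[OF j] by blast
    have "?f (?f x) = \<tau> ! (rk (A j) (?f x) - 1)" using PhiA fAin[OF x] by blast
    also have "\<dots> = \<tau> ! r" using rkf[OF r(1)] r by simp
    finally show ?thesis using r by simp
  qed
  have caseC: "?f (?f x) = x \<and> ?f x \<in> B" if x: "x \<in> C j" for x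
  proof -
    obtain r where r: "j \<le> r" "r < k" "x = \<tau> ! r" using x by (auto simp: memC)
    have q: "r - j < k - j" using r by simp
    have "?f x = L ! (r - j)" using PhiC r by simp
    then show ?thesis using PhiB[OF q] r L_in[OF q] by simp
  qed
  have caseB: "?f (?f x) = x \<and> ?f x \<in> C j" if x: "x \<in> B" for x
  proof -
    have "x \<in> set L" using x L_set by simp
    then obtain q where q0: "q < length L" "L ! q = x" by (auto simp: in_set_conv_nth)
    then have q: "q < k - j" "x = L ! q" using L_len by auto
    have "?f x = \<tau> ! (j + q)" using PhiB q by simp
    moreover have "?f (\<tau> ! (j + q)) = L ! q" using PhiC[of "j + q"] q by simp
    ultimately show ?thesis using q C_nth[of j "j + q"] by simp
  qed
  have caseR: "?f (?f x) = x \<and> ?f x \<in> R - B" if x: "x \<in> R - B" for x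
  proof -
    have nx: "x \<notin> A j" "x \<notin> C j" "x \<notin> B" using x notAC_R[OF j] by blast+
    have gx: "g x \<in> R - B" "g (g x) = x" using invsD[OF g] x by auto
    have ngx: "g x \<notin> A j" "g x \<notin> C j" "g x \<notin> B" using gx notAC_R[OF j] by blast+
    show ?thesis using PhiO[OF nx] PhiO[OF ngx] gx by simp
  qed
  have inv: "?f \<in> invs {1..n}" unfolding invs_def
  proof (intro CollectI conjI ballI allI impI)
    fix x assume x: "x \<in> {1..n}"
    have "x \<in> A j \<or> x \<in> C j \<or> x \<in> B \<or> x \<in> R - B" using S_split[OF x] AC_un[OF j] by blast
    moreover have "?f x \<in> {1..n} \<and> ?f (?f x) = x" if "x \<in> A j"
    proof -
      have "?f x \<in> {1..k}" using fAin[OF that] A_sub[OF j] by blast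
      then show ?thesis using caseA[OF that] k_S by blast
    qed
    moreover have "?f x \<in> {1..n} \<and> ?f (?f x) = x" if "x \<in> C j"
    proof -
      have "?f x \<in> R" using caseC[OF that] B by blast
      then show ?thesis using caseC[OF that] R_S by blast
    qed
    moreover have "?f x \<in> {1..n} \<and> ?f (?f x) = x" if "x \<in> B"
    proof -
      have "?f x \<in> {1..k}" using caseB[OF that] C_sub by blast
      then show ?thesis using caseB[OF that] k_S by blast
    qed
    moreover have "?f x \<in> {1..n} \<and> ?f (?f x) = x" if "x \<in> R - B"
    proof -
      have "?f x \<in> R" using caseR[OF that] by blast
      then show ?thesis using caseR[OF that] R_S by blast
    qed
    ultimately have both: "?f x \<in> {1..n} \<and> ?f (?f x) = x" by blast
    then show "?f x \<in> {1..n}" by blast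
    from both show "?f (?f x) = x" by blast
  next
    fix x assume x: "x \<notin> {1..n}"
    have nk: "x \<notin> {1..k}" "x \<notin> R" using x k_S R_S by blast+
    then have nx: "x \<notin> A j" "x \<notin> C j" "x \<notin> B" "x \<notin> R - B"
      using A_sub[OF j] C_sub[of j] B by blast+
    show "?f x = x" using PhiO[OF nx(1-3)] invsD(3)[OF g nx(4)] by simp
  qed
  have fk: "?f x \<le> k" if "x \<in> A j" for x using fAin[OF that] A_sub[OF j] by auto
  have fR: "?f x \<in> R" if "x \<in> C j" for x using caseC[OF that] B by auto
  have mono: "mono_cond \<tau> k ?f" unfolding mono_cond_def
  proof (intro allI impI)
    fix r s assume rs: "r < s" "s < k"
    show "?f (\<tau> ! r) < ?f (\<tau> ! s)"
    proof (cases "s < j")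
      case True
      then have "rk (A j) (?f (\<tau> ! r)) < rk (A j) (?f (\<tau> ! s))" using rkf rs by simp
      moreover have "?f (\<tau> ! r) \<in> A j" "?f (\<tau> ! s) \<in> A j"
        using fAin A_nth True rs by auto
      ultimately show ?thesis using rk_less_iff[OF finA] by blast
    next
      case s: False
      show ?thesis
      proof (cases "r < j")
        case True
        then have "?f (\<tau> ! r) \<le> k" using fk A_nth by blast
        moreover have "?f (\<tau> ! s) \<in> R" using fR C_nth s rs by simp
        ultimately show ?thesis by (auto simp: R_def)
      next
        case False
        then have "L ! (r - j) < L ! (s - j)"
          using sorted_wrt_nth_less[OF L_sorted, of "r - j" "s - j"] L_len rs by simp
        then show ?thesis using PhiC False s rs by simp
      qed
    qed
  qed
  have "Aset ?f = A j"
  proof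
    show "Aset ?f \<subseteq> A j"
    proof
      fix x assume x: "x \<in> Aset ?f"
      then have xk: "x \<in> {1..k}" "?f x \<le> k" by (auto simp: Aset_def)
      show "x \<in> A j"
      proof (rule ccontr)
        assume "x \<notin> A j"
        then have "x \<in> C j" using AC_un[OF j xk(1)] by blast
        then have "?f x \<in> R" by (rule fR)
        then show False using xk(2) by (simp add: R_def)
      qed
    qed
    show "A j \<subseteq> Aset ?f" using fk A_sub[OF j] by (auto simp: Aset_def)
  qed
  then have "card (Aset ?f) = j" using card_A[OF j] by simp
  then show ?thesis using inv mono by (simp add: cls_def)
qed

lemma Psi_Phi: "Psi j (Phi j (B, g)) = (B, g)"
proof -
  let ?f = "Phi j (B, g)"
  have im: "?f ` C j = B"
  proof
    show "?f ` C j \<subseteq> B"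
    proof
      fix y assume "y \<in> ?f ` C j"
      then obtain r where r: "j \<le> r" "r < k" "y = ?f (\<tau> ! r)" by (auto simp: memC)
      then have "y = L ! (r - j)" using PhiC[of r] by simp
      moreover have "r - j < k - j" using r by simp
      ultimately show "y \<in> B" using L_in by simp
    qed
    show "B \<subseteq> ?f ` C j"
    proof
      fix y assume "y \<in> B"
      then have "y \<in> set L" using L_set by simp
      then obtain q where q0: "q < length L" "L ! q = y" by (auto simp: in_set_conv_nth)
      then have q: "q < k - j" "y = L ! q" using L_len by auto
      then have "y = ?f (\<tau> ! (j + q))" using PhiC[of "j + q"] by simp
      moreover have "\<tau> ! (j + q) \<in> C j" using q C_nth by simp
      ultimately show "y \<in> ?f ` C j" by blast
    qed
  qed
  have eq: "(\<lambda>x. if x \<in> R - B then ?f x else x) = g"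
  proof
    fix x show "(if x \<in> R - B then ?f x else x) = g x"
    proof (cases "x \<in> R - B")
      case True
      then have "x \<notin> A j" "x \<notin> C j" "x \<notin> B" using notAC_R[OF j] by blast+
      then show ?thesis using PhiO True by simp
    next
      case False
      then have gx: "g x = x" using invsD(3)[OF g] by blast
      show ?thesis by (subst if_not_P[OF False]) (rule gx[symmetric])
    qed
  qed
  show ?thesis unfolding Psi_def im eq ..
qed

end

lemma Psi_Tg:
  assumes f: "f \<in> cls j"
  shows "Psi j f \<in> Tg j"
proof -
  note b = cls_basic[OF f]
  let ?B = "f ` C j"
  have BR: "?B \<subseteq> R" using cls_C[OF f] by blast
  have injf: "inj_on f {1..n}" using invs_inj[OF b(3)] .
  have "inj_on f (C j)" using inj_on_subset[OF injf] C_sub k_S by blast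
  then have cB: "card ?B = k - j" using card_C by (simp add: card_image)
  have "(\<lambda>x. if x \<in> R - ?B then f x else x) \<in> invs (R - ?B)" unfolding invs_def
  proof (intro CollectI conjI ballI allI impI)
    fix x assume x: "x \<in> R - ?B"
    have xS: "x \<in> {1..n}" using x R_S by blast
    have fx: "f x \<in> {1..n}" "f (f x) = x" using invsD[OF b(3)] xS by auto
    have nA: "f x \<notin> A j"
    proof
      assume "f x \<in> A j"
      then have "f (f x) \<in> A j" by (rule cls_A[OF f])
      then have "x \<in> A j" using fx(2) by simp
      then show False using x A_sub[OF b(1)] R_disj by blast
    qed
    have nC: "f x \<notin> C j"
    proof
      assume "f x \<in> C j"
      then have "f (f x) \<in> ?B" by blast
      then show False using x fx by simp
    qed
    have nk: "f x \<notin> {1..k}" using AC_un[OF b(1)] nA nC by blast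
    have nB: "f x \<notin> ?B"
    proof
      assume "f x \<in> ?B"
      then obtain c where c: "c \<in> C j" "f x = f c" by blast
      have cS: "c \<in> {1..n}" using c(1) C_sub k_S by blast
      have "x = c" using inj_onD[OF injf c(2) xS cS] .
      then show False using x c C_sub R_disj by blast
    qed
    have fxR: "f x \<in> R - ?B" using fx nk nB S_split by blast
    show "(if x \<in> R - ?B then f x else x) \<in> R - ?B" using x fxR by simp
    show "(if (if x \<in> R - ?B then f x else x) \<in> R - ?B then f (if x \<in> R - ?B then f x else x)
           else (if x \<in> R - ?B then f x else x)) = x" using x fxR fx by simp
  next
    fix x assume "x \<notin> R - ?B" then show "(if x \<in> R - ?B then f x else x) = x" by (rule if_not_P)
  qed
  then show ?thesis using BR cB by (simp add: Tg_def Psi_def)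
qed

lemma Phi_Psi:
  assumes f: "f \<in> cls j"
  shows "Phi j (Psi j f) = f"
proof -
  note b = cls_basic[OF f]
  let ?B = "f ` C j"
  let ?g = "\<lambda>x. if x \<in> R - ?B then f x else x"
  have PT: "Psi j f \<in> Tg j" by (rule Psi_Tg[OF f])
  then have B: "?B \<subseteq> R" "card ?B = k - j" and g: "?g \<in> invs (R - ?B)"
    by (auto simp: Tg_def Psi_def)
  have Pe: "Psi j f = (?B, ?g)" by (simp add: Psi_def)
  let ?L = "sorted_list_of_set ?B"
  have Lq: "f (\<tau> ! (j + q)) = ?L ! q" if q: "q < k - j" for q
  proof (rule smono_unique[of 0 "k - j" "\<lambda>q. f (\<tau> ! (j + q))" "\<lambda>q. ?L ! q"])
    show "\<And>r s. 0 \<le> r \<Longrightarrow> r < s \<Longrightarrow> s < k - j \<Longrightarrow> f (\<tau> ! (j + r)) < f (\<tau> ! (j + s))"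
      using b(4) by (simp add: mono_cond_def)
    show "\<And>r s. 0 \<le> r \<Longrightarrow> r < s \<Longrightarrow> s < k - j \<Longrightarrow> ?L ! r < ?L ! s"
      using L_sorted[OF b(1) B g] L_len[OF b(1) B g] unfolding L_def[OF b(1) B g]
      by (auto intro: sorted_wrt_nth_less)
    have "(\<lambda>q. f (\<tau> ! (j + q))) ` {0..<k - j} = f ` ((\<lambda>q. \<tau> ! (j + q)) ` {0..<k - j})"
      by (simp add: image_image)
    also have "\<dots> = ?B" using C_shift[OF b(1)] by simp
    also have "\<dots> = set ?L" using L_set[OF b(1) B g] unfolding L_def[OF b(1) B g] by simp
    also have "\<dots> = (\<lambda>q. ?L ! q) ` {0..<k - j}"
      using set_nth_image[of ?L] L_len[OF b(1) B g] unfolding L_def[OF b(1) B g] by simp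
    finally show "(\<lambda>q. f (\<tau> ! (j + q))) ` {0..<k - j} = (\<lambda>q. ?L ! q) ` {0..<k - j}" .
  qed (use q in auto)
  show ?thesis unfolding Pe
  proof
    fix x
    show "Phi j (?B, ?g) x = f x"
    proof (cases "x \<in> A j")
      case True then show ?thesis using PhiA[OF b(1) B g] cls_A_val[OF f] by simp
    next
      case nA: False
      show ?thesis
      proof (cases "x \<in> C j")
        case True
        then obtain r where r: "j \<le> r" "r < k" "x = \<tau> ! r" by (auto simp: memC)
        then have "Phi j (?B, ?g) x = ?L ! (r - j)"
          using PhiC[OF b(1) B g] unfolding L_def[OF b(1) B g] by simp
        also have "\<dots> = f x" using Lq[of "r - j"] r by simp
        finally show ?thesis .
      next
        case nC: False
        show ?thesis
        proof (cases "x \<in> ?B")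
          case True
          then obtain c where c: "c \<in> C j" "x = f c" by blast
          then obtain r where r: "j \<le> r" "r < k" "c = \<tau> ! r" by (auto simp: memC)
          have q: "r - j < k - j" using r by simp
          have "x = ?L ! (r - j)" using Lq[OF q] r c by simp
          then have "Phi j (?B, ?g) x = \<tau> ! (j + (r - j))"
            using PhiB[OF b(1) B g q] unfolding L_def[OF b(1) B g] by simp
          also have "\<dots> = c" using r by simp
          also have "\<dots> = f x"
          proof -
            have "c \<in> {1..n}" using c(1) C_sub k_S by blast
            then show ?thesis using c(2) invsD(2)[OF b(3)] by simp
          qed
          finally show ?thesis .
        next
          case nB: False
          have "Phi j (?B, ?g) x = ?g x" using PhiO[OF b(1) B g nA nC nB] by simp
          also have "\<dots> = f x"
          proof (cases "x \<in> {1..n}")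
            case True
            then have "x \<in> R" using S_split AC_un[OF b(1)] nA nC by blast
            then show ?thesis using nB by simp
          next
            case False
            then have "x \<notin> R" using R_S by blast
            then show ?thesis using invsD(3)[OF b(3) False] by simp
          qed
          finally show ?thesis .
        qed
      qed
    qed
  qed
qed

lemma bij_cls:
  assumes j: "j \<le> k" and pi: "PI j"
  shows "bij_betw (Phi j) (Tg j) (cls j)"
proof (rule bij_betw_byWitness[where f'="Psi j"])
  show "\<forall>a\<in>Tg j. Psi j (Phi j a) = a"
    using Psi_Phi[OF j] by (auto simp: Tg_def)
  show "\<forall>a'\<in>cls j. Phi j (Psi j a') = a'" using Phi_Psi by blast
  show "Phi j ` Tg j \<subseteq> cls j" using Phi_cls[OF j _ _ _ pi] by (auto simp: Tg_def)
  show "Psi j ` cls j \<subseteq> Tg j" using Psi_Tg by blast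
qed

lemma card_Tg:
  assumes j: "j \<le> k"
  shows "card (Tg j) = ((n - k) choose (k - j)) * t (n + j - 2 * k)"
proof -
  let ?X = "{B. B \<subseteq> R \<and> card B = k - j}"
  have cR: "card R = n - k" by (simp add: R_def)
  have "?X \<subseteq> Pow R" by auto
  then have finX: "finite ?X" using finR by (simp add: finite_subset)
  have each: "card (invs (R - B)) = t (n - k - (k - j))" if "B \<in> ?X" for B
  proof -
    have "finite B" using that finR finite_subset by blast
    then have "card (R - B) = n - k - (k - j)" using that cR by (simp add: card_Diff_subset)
    then have "card (invs (R - B)) = card (invs {1..n - k - (k - j)})"
      using finR by (intro invs_card) auto
    then show ?thesis by (simp add: t_invs)
  qed
  have "card (Tg j) = (\<Sum>B\<in>?X. card (invs (R - B)))"
    unfolding Tg_def using finX finR by (intro card_SigmaI) (auto intro: finite_invs)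
  also have "\<dots> = card ?X * t (n - k - (k - j))" using each by simp
  also have "card ?X = (n - k) choose (k - j)" using n_subsets[OF finR] cR by simp
  finally have e: "card (Tg j) = ((n - k) choose (k - j)) * t (n - k - (k - j))" .
  show ?thesis
  proof (cases "k - j \<le> n - k")
    case True
    then have "n - k - (k - j) = n + j - 2 * k" using j kn by simp
    then show ?thesis using e by simp
  next
    case False then show ?thesis using e by simp
  qed
qed

lemma card_cls:
  assumes j: "j \<in> jset \<tau>"
  shows "card (cls j) = ((n - k) choose (k - j)) * t (n + j - 2 * k)"
proof -
  have jj: "j \<le> k" "PI j" using j jset_iff by auto
  have "card (Tg j) = card (cls j)" using bij_cls[OF jj] by (rule bij_betw_same_card)
  then show ?thesis using card_Tg[OF jj(1)] by simp
qed

lemma main_count: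
  "card {f \<in> invs {1..n}. mono_cond \<tau> k f} = (\<Sum>j\<in>jset \<tau>. ((n - k) choose (k - j)) * t (n + j - 2 * k))"
proof -
  have "jset \<tau> \<subseteq> {..k}" using jset_iff by blast
  then have finJ: "finite (jset \<tau>)" using finite_subset by blast
  have un: "{f \<in> invs {1..n}. mono_cond \<tau> k f} = (\<Union>j\<in>jset \<tau>. cls j)"
  proof
    show "{f \<in> invs {1..n}. mono_cond \<tau> k f} \<subseteq> (\<Union>j\<in>jset \<tau>. cls j)"
    proof
      fix f assume f: "f \<in> {f \<in> invs {1..n}. mono_cond \<tau> k f}"
      then have c: "f \<in> cls (card (Aset f))" by (simp add: cls_def)
      then have "card (Aset f) \<in> jset \<tau>" using cls_basic(1)[OF c] cls_PI[OF c] jset_iff by simp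
      then show "f \<in> (\<Union>j\<in>jset \<tau>. cls j)" using c by blast
    qed
    show "(\<Union>j\<in>jset \<tau>. cls j) \<subseteq> {f \<in> invs {1..n}. mono_cond \<tau> k f}"
      by (auto simp: cls_def)
  qed
  have fc: "finite (cls j)" for j
  proof -
    have "cls j \<subseteq> invs {1..n}" by (auto simp: cls_def)
    then show ?thesis using finite_invs[of "{1..n}"] finite_subset by blast
  qed
  have dj: "cls i \<inter> cls j = {}" if "i \<noteq> j" for i j
    using that by (auto simp: cls_def)
  have "card (\<Union>j\<in>jset \<tau>. cls j) = (\<Sum>j\<in>jset \<tau>. card (cls j))"
    using finJ fc dj by (intro card_UN_disjoint) auto
  also have "\<dots> = (\<Sum>j\<in>jset \<tau>. ((n - k) choose (k - j)) * t (n + j - 2 * k))"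
    using card_cls by (rule sum.cong[OF refl])
  finally show ?thesis using un by simp
qed

end

theorem mainTheorem3:
  fixes \<tau> :: "nat list" and k n :: nat
  assumes "\<tau> \<in> perms k" and "n \<ge> k"
  shows "inv_count n \<tau> = (\<Sum>j\<in>jset \<tau>. ((n - k) choose (k - j)) * t (n + j - 2 * k))"
proof -
  interpret S3 \<tau> k n using assms by unfold_locales
  let ?P = "{p \<in> involutions n. contains_subseq p \<tau>}"
  let ?F = "{f \<in> invs {1..n}. mono_cond \<tau> k f}"
  have bij: "bij_betw fun_of (involutions n) (invs {1..n})" by (rule bij_fun_of)
  have inj: "inj_on fun_of ?P"
    using bij_betw_imp_inj_on[OF bij] by (rule inj_on_subset) auto
  have im: "fun_of ` ?P = ?F"
  proof
    show "fun_of ` ?P \<subseteq> ?F"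
    proof
      fix f assume "f \<in> fun_of ` ?P"
      then obtain p where p: "p \<in> involutions n" "contains_subseq p \<tau>" "f = fun_of p" by blast
      then show "f \<in> ?F" using fun_of_invs[OF p(1)] contains_iff[OF p(1) assms(1) assms(2)] by simp
    qed
    show "?F \<subseteq> fun_of ` ?P"
    proof
      fix f assume f: "f \<in> ?F"
      let ?p = "map (\<lambda>i. f (Suc i)) [0..<n]"
      have p: "?p \<in> involutions n" using map_invs f by blast
      have e: "fun_of ?p = f" using fun_of_map f by blast
      have "contains_subseq ?p \<tau>" using contains_iff[OF p assms(1) assms(2)] e f by simp
      then have "?p \<in> ?P" using p by simp
      then have "fun_of ?p \<in> fun_of ` ?P" by (rule imageI)
      then show "f \<in> fun_of ` ?P" using e by simp
    qed
  qed
  have "inv_count n \<tau> = card ?P" by (simp add: inv_count_def)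
  also have "\<dots> = card (fun_of ` ?P)" using inj by (simp add: card_image)
  also have "\<dots> = card ?F" using im by simp
  also have "\<dots> = (\<Sum>j\<in>jset \<tau>. ((n - k) choose (k - j)) * t (n + j - 2 * k))" by (rule main_count)
  finally show ?thesis .
qed

end
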